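(* Let $(\Omega,P,\pi)$ be a finite irreducible reversible Markov chain (in continuous time) and $\mu$ a probability distribution on $\Omega$. Then for any $0<\epsilon<\delta<1$ and any $0<\beta\le\gamma<1$, $$\mathrm{hit}_{\gamma,\mu}(\delta)\le \mathrm{hit}_{\beta,\mu}(\delta)\le \mathrm{hit}_{\gamma,\mu}(\delta-\epsilon)+\beta^{-1}t_{\mathrm{rel}}\log\Big(\frac{1-\beta}{(1-\gamma)\epsilon}\Big).$$
   Context: Continuous-time chain with heat kernel $H_t(x,y)=\sum_{k\ge0}e^{-t}\frac{t^k}{k!}P^k(x,y)$; reversible means $\pi(x)P(x,y)=\pi(y)P(y,x)$. $\mathrm P_\mu$: law of the chain with $X_0\sim\mu$. $t_{\mathrm{rel}}:=(1-\lambda_2)^{-1}$, $\lambda_2$ the second largest eigenvalue of $P$. $T_B:=\inf\{t\ge0:X_t\in B\}$; $\mathrm{hit}_{\delta,\mu}(q):=\inf\{t\ge0:\max_{B:\pi(B)\ge\delta}\mathrm P_\mu[T_B>t]\le q\}$. *)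

theory Defs
  imports Complex_Main
begin

(* Transition matrices on a finite state space 'a are functions 'a => 'a => real. *)

definition stochastic :: "('a::finite \<Rightarrow> 'a \<Rightarrow> real) \<Rightarrow> bool" where
  "stochastic P \<longleftrightarrow> (\<forall>x y. 0 \<le> P x y) \<and> (\<forall>x. (\<Sum>y\<in>UNIV. P x y) = 1)"

definition prob_dist :: "('a::finite \<Rightarrow> real) \<Rightarrow> bool" where
  "prob_dist \<mu> \<longleftrightarrow> (\<forall>x. 0 \<le> \<mu> x) \<and> (\<Sum>x\<in>UNIV. \<mu> x) = 1"

fun mpow :: "('a::finite \<Rightarrow> 'a \<Rightarrow> real) \<Rightarrow> nat \<Rightarrow> 'a \<Rightarrow> 'a \<Rightarrow> real" where
  "mpow P 0 x y = (if x = y then 1 else 0)"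
| "mpow P (Suc k) x y = (\<Sum>z\<in>UNIV. P x z * mpow P k z y)"

definition irreducible_chain :: "('a::finite \<Rightarrow> 'a \<Rightarrow> real) \<Rightarrow> bool" where
  "irreducible_chain P \<longleftrightarrow> (\<forall>x y. \<exists>k. mpow P k x y > 0)"

definition reversible_wrt :: "('a::finite \<Rightarrow> 'a \<Rightarrow> real) \<Rightarrow> ('a \<Rightarrow> real) \<Rightarrow> bool" where
  "reversible_wrt P \<pi> \<longleftrightarrow> (\<forall>x y. \<pi> x * P x y = \<pi> y * P y x)"

(* real eigenvalue of P (P acting on column vectors) *)
definition is_eigenvalue :: "('a::finite \<Rightarrow> 'a \<Rightarrow> real) \<Rightarrow> real \<Rightarrow> bool" where
  "is_eigenvalue P l \<longleftrightarrow> (\<exists>v::'a \<Rightarrow> real. v \<noteq> (\<lambda>_. 0) \<and> (\<forall>x. (\<Sum>y\<in>UNIV. P x y * v y) = l * v x))"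

(* second largest eigenvalue: for an irreducible chain the eigenvalue 1 is simple and
   the largest, so lambda_2 is the largest eigenvalue different from 1 *)
definition lambda2 :: "('a::finite \<Rightarrow> 'a \<Rightarrow> real) \<Rightarrow> real" where
  "lambda2 P = Max {l. is_eigenvalue P l \<and> l \<noteq> 1}"

definition t_rel :: "('a::finite \<Rightarrow> 'a \<Rightarrow> real) \<Rightarrow> real" where
  "t_rel P = 1 / (1 - lambda2 P)"

(* avoid P B k x = probability that the discrete-time chain started at x
   stays outside B at steps 0,1,...,k *)
fun avoid :: "('a::finite \<Rightarrow> 'a \<Rightarrow> real) \<Rightarrow> 'a set \<Rightarrow> nat \<Rightarrow> 'a \<Rightarrow> real" where
  "avoid P B 0 x = (if x \<in> B then 0 else 1)"
| "avoid P B (Suc k) x = (if x \<in> B then 0 else (\<Sum>y\<in>UNIV. P x y * avoid P B k y))"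

(* P_mu[T_B > t] for the continuous-time (rate-1 Poissonised) chain with heat kernel
   H_t = sum_k e^{-t} t^k/k! P^k: the chain avoids B up to time t iff the
   embedded discrete chain avoids B during its first N_t steps, N_t ~ Poisson(t). *)
definition survival :: "('a::finite \<Rightarrow> 'a \<Rightarrow> real) \<Rightarrow> ('a \<Rightarrow> real) \<Rightarrow> 'a set \<Rightarrow> real \<Rightarrow> real" where
  "survival P \<mu> B t = (\<Sum>x\<in>UNIV. \<mu> x * (\<Sum>k. exp (- t) * t ^ k / fact k * avoid P B k x))"

(* hit_{delta,mu}(q) = inf { t >= 0 : max_{B : pi(B) >= delta} P_mu[T_B > t] <= q } *)
definition hit :: "('a::finite \<Rightarrow> 'a \<Rightarrow> real) \<Rightarrow> ('a \<Rightarrow> real) \<Rightarrow> real \<Rightarrow> ('a \<Rightarrow> real) \<Rightarrow> real \<Rightarrow> real" where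
  "hit P \<pi> \<delta> \<mu> q = Inf {t. 0 \<le> t \<and> (\<forall>B. sum \<pi> B \<ge> \<delta> \<longrightarrow> survival P \<mu> B t \<le> q)}"

end

theory Submission
  imports Defs "HOL-Analysis.Analysis"
begin


definition ap :: "('a::finite \<Rightarrow> 'a \<Rightarrow> real) \<Rightarrow> real^'a \<Rightarrow> real^'a" where
  "ap S g = (\<chi> x. \<Sum>y\<in>UNIV. S x y * g$y)"

lemma ap_linear: "linear (ap S)"
  by (rule linearI) (auto simp: ap_def vec_eq_iff algebra_simps sum.distrib sum_distrib_left)

lemma ap_add: "ap S (a + b) = ap S a + ap S b"
  using ap_linear linear_add by blast
lemma ap_scale: "ap S (c *\<^sub>R a) = c *\<^sub>R ap S a"
  using ap_linear linear_scale by blast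
lemma ap_diff: "ap S (a - b) = ap S a - ap S b"
  using ap_linear linear_diff by blast
lemma ap_zero: "ap S 0 = 0"
  using ap_linear linear_0 by blast
lemma ap_sum: "ap S (sum f E) = (\<Sum>e\<in>E. ap S (f e))"
  using ap_linear linear_sum by blast

lemma ap_sym:
  assumes "\<forall>x y. S x y = S y x"
  shows "ap S g \<bullet> h = g \<bullet> ap S h"
proof -
  have "ap S g \<bullet> h = (\<Sum>x\<in>UNIV. \<Sum>y\<in>UNIV. S x y * g$y * h$x)"
    by (simp add: ap_def inner_vec_def sum_distrib_right)
  also have "\<dots> = (\<Sum>y\<in>UNIV. \<Sum>x\<in>UNIV. S x y * g$y * h$x)" by (rule sum.swap)
  also have "\<dots> = g \<bullet> ap S h"
    by (simp add: ap_def inner_vec_def sum_distrib_left assms mult_ac)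
  finally show ?thesis .
qed

lemma ap_cont: "continuous_on A (ap S)"
  using ap_linear by (auto intro: linear_continuous_on simp: linear_conv_bounded_linear)

lemma eigen_exists:
  assumes sym: "\<forall>x y. S x y = S y x" and V: "subspace V" and inv: "\<forall>g\<in>V. ap S g \<in> V"
    and g0: "g \<in> V" "g \<noteq> 0"
  shows "\<exists>e\<in>V. norm e = 1 \<and> (\<exists>M. ap S e = M *\<^sub>R e)"
proof -
  let ?K = "sphere 0 1 \<inter> V"
  have cK: "compact ?K" by (rule compact_Int_closed[OF compact_sphere closed_subspace[OF V]])
  have "g /\<^sub>R norm g \<in> ?K" using g0 V by (simp add: subspace_scale)
  hence ne: "?K \<noteq> {}" by blast
  have cont: "continuous_on ?K (\<lambda>y. y \<bullet> ap S y)"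
    by (intro continuous_intros ap_cont)
  obtain e where eK: "e \<in> ?K" and emax: "\<forall>y\<in>?K. y \<bullet> ap S y \<le> e \<bullet> ap S e"
    using continuous_attains_sup[OF cK ne cont] by blast
  define M where "M = e \<bullet> ap S e"
  have ee: "e \<bullet> e = 1" using eK by (simp add: dot_square_norm)
  have bound: "y \<bullet> ap S y \<le> M * (y \<bullet> y)" if yV: "y \<in> V" for y
  proof (cases "y = 0")
    case True thus ?thesis by (simp add: ap_zero)
  next
    case False
    let ?z = "y /\<^sub>R norm y"
    have "?z \<in> ?K" using yV False V by (simp add: subspace_scale)
    hence "?z \<bullet> ap S ?z \<le> M" using emax M_def by blast
    hence "(y \<bullet> ap S y) / (norm y)^2 \<le> M"
      by (simp add: ap_scale power2_eq_square divide_simps)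
    hence "y \<bullet> ap S y \<le> M * (norm y)^2" using False by (simp add: divide_simps)
    thus ?thesis by (simp add: power2_norm_eq_inner)
  qed
  define d where "d = ap S e - M *\<^sub>R e"
  have eV: "e \<in> V" using eK by blast
  have dV: "d \<in> V" unfolding d_def using inv eV V by (simp add: subspace_diff subspace_scale)
  have quad: "2 * t * (d \<bullet> d) + t^2 * (d \<bullet> ap S d - M * (d \<bullet> d)) \<le> 0" for t
  proof -
    have "e + t *\<^sub>R d \<in> V" using eV dV V by (simp add: subspace_add subspace_scale)
    from bound[OF this]
    have "(e + t *\<^sub>R d) \<bullet> ap S (e + t *\<^sub>R d) \<le> M * ((e + t *\<^sub>R d) \<bullet> (e + t *\<^sub>R d))" .
    moreover have "d \<bullet> ap S e = e \<bullet> ap S d" using ap_sym[OF sym, of d e] by (simp add: inner_commute)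
    moreover have "d \<bullet> ap S e - M * (e \<bullet> d) = d \<bullet> d"
      by (simp add: d_def inner_diff_right inner_diff_left inner_commute algebra_simps)
    ultimately show ?thesis
      by (simp add: ap_add ap_scale inner_add_left inner_add_right ee M_def[symmetric]
          algebra_simps power2_eq_square inner_commute)
  qed
  have b0: "d \<bullet> ap S d - M * (d \<bullet> d) \<le> 0" using bound[OF dV] by simp
  have "d \<bullet> d = 0"
  proof (rule ccontr)
    assume "d \<bullet> d \<noteq> 0"
    hence a: "d \<bullet> d > 0" by (simp add: order_le_neq_trans)
    define a where "a = d \<bullet> d"
    define b where "b = d \<bullet> ap S d - M * (d \<bullet> d)"
    define t where "t = a / (1 - b)"
    have "1 - b > 0" using b0 b_def by simp
    hence tp: "t > 0" using a a_def t_def by simp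
    have "2 * t * a + t^2 * b \<le> 0" using quad[of t] a_def b_def by simp
    moreover have "2 * t * a + t^2 * b = t * (2 * a + t * b)" by (simp add: algebra_simps power2_eq_square)
    moreover have "t * b > - a"
    proof -
      have "a * b > - a * (1 - b)" using a a_def by (simp add: algebra_simps)
      thus ?thesis unfolding t_def using \<open>1 - b > 0\<close> by (simp add: field_simps)
    qed
    moreover have "t * (2 * a + t * b) > 0"
    proof -
      have "2*a + t*b > 0" using \<open>t*b > -a\<close> a a_def by linarith
      thus ?thesis using tp by simp
    qed
    ultimately show False by linarith
  qed
  hence "ap S e = M *\<^sub>R e" unfolding d_def by simp
  moreover have "norm e = 1" using eK by simp
  ultimately show ?thesis using eV by blast
qed

lemma spectral_decomp:
  assumes sym: "\<forall>x y. S x y = S y x"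
  shows "subspace V \<Longrightarrow> (\<forall>g\<in>V. ap S g \<in> V) \<Longrightarrow> f \<in> V \<Longrightarrow>
    \<exists>E. finite E \<and> E \<subseteq> V \<and> pairwise orthogonal E \<and> (\<forall>e\<in>E. \<exists>\<mu>. ap S e = \<mu> *\<^sub>R e) \<and> f = \<Sum>E"
proof (induction "dim V" arbitrary: V f rule: less_induct)
  case less
  show ?case
  proof (cases "\<exists>g\<in>V. g \<noteq> 0")
    case False
    hence "f = 0" using less.prems by blast
    thus ?thesis by (intro exI[of _ "{}"]) auto
  next
    case True
    then obtain g where g: "g \<in> V" "g \<noteq> 0" by blast
    obtain e M where eV: "e \<in> V" and ne: "norm e = 1" and eM: "ap S e = M *\<^sub>R e"
      using eigen_exists[OF sym less.prems(1,2) g] by blast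
    have ee: "e \<bullet> e = 1" using ne by (simp add: dot_square_norm)
    define W where "W = V \<inter> {y. orthogonal e y}"
    have sW: "subspace W" unfolding W_def
      using less.prems(1) subspace_orthogonal_to_vector[of e] by (simp add: subspace_inter)
    have iW: "\<forall>g\<in>W. ap S g \<in> W"
    proof
      fix h assume h: "h \<in> W"
      hence "ap S h \<in> V" using less.prems(2) W_def by blast
      moreover have "e \<bullet> ap S h = 0"
      proof -
        have "e \<bullet> ap S h = ap S e \<bullet> h" using ap_sym[OF sym, of e h] by simp
        also have "\<dots> = M * (e \<bullet> h)" by (simp add: eM)
        also have "\<dots> = 0" using h W_def by (simp add: orthogonal_def)
        finally show ?thesis .
      qed
      ultimately show "ap S h \<in> W" unfolding W_def by (simp add: orthogonal_def)
    qed
    have WV: "W \<subset> V"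
    proof -
      have "W \<subseteq> V" unfolding W_def by blast
      moreover have "e \<notin> W" using ee unfolding W_def by (simp add: orthogonal_def)
      ultimately show ?thesis using eV by blast
    qed
    have "dim W < dim V"
    proof (rule dim_psubset)
      have h1: "span W = W" using sW by (metis span_eq_iff)
      have h2: "span V = V" using less.prems(1) by (metis span_eq_iff)
      show "span W \<subset> span V" unfolding h1 h2 by (rule WV)
    qed
    define c where "c = f \<bullet> e"
    define f' where "f' = f - c *\<^sub>R e"
    have f'W: "f' \<in> W" unfolding W_def f'_def orthogonal_def using less.prems(1,3) eV ee
      by (simp add: subspace_diff subspace_scale c_def inner_diff_right inner_commute)
    obtain E' where E': "finite E'" "E' \<subseteq> W" "pairwise orthogonal E'"
       "\<forall>e\<in>E'. \<exists>\<mu>. ap S e = \<mu> *\<^sub>R e" "f' = \<Sum>E'"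
      using less.hyps[OF \<open>dim W < dim V\<close> sW iW f'W] by blast
    show ?thesis
    proof (cases "c = 0")
      case True
      hence "f = f'" by (simp add: f'_def)
      thus ?thesis using E' WV by blast
    next
      case False
      have notin: "c *\<^sub>R e \<notin> E'"
      proof
        assume "c *\<^sub>R e \<in> E'"
        hence "orthogonal e (c *\<^sub>R e)" using E'(2) W_def by blast
        thus False using False ee by (simp add: orthogonal_def)
      qed
      have orth: "\<forall>y\<in>E'. orthogonal (c *\<^sub>R e) y \<and> orthogonal y (c *\<^sub>R e)"
        using E'(2) W_def by (auto simp: orthogonal_def inner_commute)
      show ?thesis
      proof (intro exI[of _ "insert (c *\<^sub>R e) E'"] conjI)
        show "finite (insert (c *\<^sub>R e) E')" using E' by simp
        show "insert (c *\<^sub>R e) E' \<subseteq> V" using E'(2) WV eV less.prems(1)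
          by (auto simp: subspace_scale)
        show "pairwise orthogonal (insert (c *\<^sub>R e) E')"
          using E'(3) orth by (simp add: pairwise_insert)
        show "\<forall>x\<in>insert (c *\<^sub>R e) E'. \<exists>\<mu>. ap S x = \<mu> *\<^sub>R x"
          using E'(4) eM by (auto simp: ap_scale intro: exI[of _ M])
        show "f = \<Sum>(insert (c *\<^sub>R e) E')"
          using E'(1,5) notin by (simp add: f'_def) (metis add.commute diff_add_cancel)
      qed
    qed
  qed
qed

lemma orth_sum_inner:
  assumes "finite E" "pairwise orthogonal E"
  shows "(\<Sum>E) \<bullet> (\<Sum>e\<in>E. c e *\<^sub>R e) = (\<Sum>e\<in>E. c e * (e \<bullet> e))"
proof -
  have "(\<Sum>E) \<bullet> (\<Sum>e\<in>E. c e *\<^sub>R e) = (\<Sum>x\<in>E. \<Sum>y\<in>E. c y * (x \<bullet> y))"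
    by (simp add: inner_sum_left inner_sum_right sum_distrib_left mult_ac) (rule sum.swap)
  also have "\<dots> = (\<Sum>x\<in>E. c x * (x \<bullet> x))"
  proof (rule sum.cong[OF refl])
    fix x assume x: "x \<in> E"
    have "(\<Sum>y\<in>E. c y * (x \<bullet> y)) = c x * (x \<bullet> x) + (\<Sum>y\<in>E - {x}. c y * (x \<bullet> y))"
      using assms(1) x by (simp add: sum.remove)
    also have "(\<Sum>y\<in>E - {x}. c y * (x \<bullet> y)) = 0"
      using assms(2) x by (intro sum.neutral) (auto simp: pairwise_def orthogonal_def)
    finally show "(\<Sum>y\<in>E. c y * (x \<bullet> y)) = c x * (x \<bullet> x)" by simp
  qed
  finally show ?thesis .
qed

lemma orth_sum_norm:
  assumes "finite E" "pairwise orthogonal E"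
  shows "(\<Sum>E) \<bullet> (\<Sum>E) = (\<Sum>e\<in>E. e \<bullet> e)"
  using orth_sum_inner[OF assms, of "\<lambda>_. 1"] by simp

lemma ap_iter_eigen:
  assumes "\<forall>e\<in>E. ap S e = \<mu> e *\<^sub>R e"
  shows "(ap S ^^ k) (\<Sum>E) = (\<Sum>e\<in>E. (\<mu> e ^ k) *\<^sub>R e)"
proof (induction k)
  case 0 show ?case by simp
next
  case (Suc k)
  have "(ap S ^^ Suc k) (\<Sum>E) = ap S (\<Sum>e\<in>E. (\<mu> e ^ k) *\<^sub>R e)" using Suc by simp
  also have "\<dots> = (\<Sum>e\<in>E. (\<mu> e ^ Suc k) *\<^sub>R e)"
    using assms by (simp add: ap_sum ap_scale mult.commute)
  finally show ?case .
qed




locale chain =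
  fixes P :: "'a::finite \<Rightarrow> 'a \<Rightarrow> real" and \<pi> :: "'a \<Rightarrow> real"
  assumes stoch: "stochastic P" and irr: "irreducible_chain P"
    and pd: "prob_dist \<pi>" and rev: "reversible_wrt P \<pi>"
begin

lemma P_nonneg: "0 \<le> P x y" using stoch by (simp add: stochastic_def)
lemma P_row: "(\<Sum>y\<in>UNIV. P x y) = 1" using stoch by (simp add: stochastic_def)
lemma pi_nonneg: "0 \<le> \<pi> x" using pd by (simp add: prob_dist_def)
lemma pi_sum: "(\<Sum>x\<in>UNIV. \<pi> x) = 1" using pd by (simp add: prob_dist_def)
lemma revP: "\<pi> x * P x y = \<pi> y * P y x" using rev by (simp add: reversible_wrt_def)

lemma mpow_nonneg: "0 \<le> mpow P k x y"
  by (induction k arbitrary: x) (auto intro!: sum_nonneg mult_nonneg_nonneg P_nonneg)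

lemma sum_pos_ex:
  fixes f :: "'b \<Rightarrow> real"
  assumes "sum f A > 0" shows "\<exists>z\<in>A. f z > 0"
proof (rule ccontr)
  assume "\<not> ?thesis" hence "sum f A \<le> 0" by (intro sum_nonpos) (auto simp: not_less)
  thus False using assms by simp
qed

lemma pi_pos_aux: "\<pi> y > 0 \<Longrightarrow> mpow P k y x > 0 \<Longrightarrow> \<pi> x > 0"
proof (induction k arbitrary: y)
  case 0 thus ?case by (auto split: if_splits)
next
  case (Suc k)
  obtain z where z: "P y z * mpow P k z x > 0"
    using sum_pos_ex[of "\<lambda>z. P y z * mpow P k z x" UNIV] Suc.prems by auto
  have Pyz: "P y z > 0" and mk: "mpow P k z x > 0"
    using z P_nonneg[of y z] mpow_nonneg[of k z x]
    by (metis less_eq_real_def mult_nonneg_nonneg not_less mult_eq_0_iff)+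
  have "\<pi> z * P z y > 0" using revP[of y z] Suc.prems(1) Pyz by (metis mult_pos_pos)
  hence "\<pi> z > 0" using pi_nonneg[of z] P_nonneg[of z y]
    by (metis less_eq_real_def mult_eq_0_iff)
  thus ?case using Suc.IH mk by blast
qed

lemma pi_pos: "\<pi> x > 0"
proof -
  have "(\<Sum>x\<in>UNIV. \<pi> x) > 0" using pi_sum by simp
  then obtain y where y: "\<pi> y > 0" using sum_pos_ex by blast
  obtain k where "mpow P k y x > 0" using irr by (auto simp: irreducible_chain_def)
  thus ?thesis using pi_pos_aux y by blast
qed

lemma pi_ne0[simp]: "\<pi> x \<noteq> 0" using pi_pos[of x] by simp
lemma sqrt_pi_ne0[simp]: "sqrt (\<pi> x) \<noteq> 0" using pi_pos[of x] by simp
lemma sqrt_pi_sq[simp]: "sqrt (\<pi> x) * sqrt (\<pi> x) = \<pi> x" using pi_nonneg[of x] by simp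

definition S :: "'a \<Rightarrow> 'a \<Rightarrow> real" where
  "S x y = sqrt (\<pi> x) * P x y / sqrt (\<pi> y)"

lemma S_sym: "\<forall>x y. S x y = S y x"
proof (intro allI)
  fix x y
  have sx: "sqrt (\<pi> x) > 0" and sy: "sqrt (\<pi> y) > 0" using pi_pos by auto
  have "S x y = \<pi> x * P x y / (sqrt (\<pi> x) * sqrt (\<pi> y))"
    unfolding S_def using sx sy pi_nonneg[of x]
    by (simp add: field_simps)
  also have "\<dots> = \<pi> y * P y x / (sqrt (\<pi> y) * sqrt (\<pi> x))" by (simp add: revP mult.commute)
  also have "\<dots> = S y x"
    unfolding S_def using sx sy pi_nonneg[of y]
    by (simp add: field_simps)
  finally show "S x y = S y x" .
qed

definition r :: "real^'a" where "r = (\<chi> x. sqrt (\<pi> x))"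

lemma ap_S_r: "ap S r = r"
proof -
  have "(\<Sum>y\<in>UNIV. S x y * sqrt (\<pi> y)) = sqrt (\<pi> x)" for x
  proof -
    have "(\<Sum>y\<in>UNIV. S x y * sqrt (\<pi> y)) = (\<Sum>y\<in>UNIV. sqrt (\<pi> x) * P x y)"
      using pi_pos by (intro sum.cong) (auto simp: S_def)
    also have "\<dots> = sqrt (\<pi> x)" by (simp add: sum_distrib_left[symmetric] P_row)
    finally show ?thesis .
  qed
  thus ?thesis by (simp add: ap_def r_def vec_eq_iff)
qed

lemma r_norm: "r \<bullet> r = 1"
  using pi_nonneg by (simp add: r_def inner_vec_def pi_sum)

lemma r_pos: "r$x > 0" using pi_pos by (simp add: r_def)

(* conversion between eigenvectors *)
lemma eig_to_S:
  assumes "\<forall>x. (\<Sum>y\<in>UNIV. P x y * v y) = l * v x"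
  shows "ap S (\<chi> x. sqrt (\<pi> x) * v x) = l *\<^sub>R (\<chi> x. sqrt (\<pi> x) * v x)"
proof -
  have "(\<Sum>y\<in>UNIV. S x y * (sqrt (\<pi> y) * v y)) = l * (sqrt (\<pi> x) * v x)" for x
  proof -
    have "(\<Sum>y\<in>UNIV. S x y * (sqrt (\<pi> y) * v y)) = sqrt (\<pi> x) * (\<Sum>y\<in>UNIV. P x y * v y)"
      using pi_pos by (simp add: sum_distrib_left S_def)
    thus ?thesis using assms by simp
  qed
  thus ?thesis by (simp add: ap_def vec_eq_iff)
qed

lemma S_to_eig:
  assumes "ap S g = l *\<^sub>R g"
  shows "\<forall>x. (\<Sum>y\<in>UNIV. P x y * (g$y / sqrt (\<pi> y))) = l * (g$x / sqrt (\<pi> x))"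
proof
  fix x
  have "(\<Sum>y\<in>UNIV. S x y * g$y) = l * g$x" using assms by (simp add: ap_def vec_eq_iff)
  moreover have "(\<Sum>y\<in>UNIV. S x y * g$y) = sqrt (\<pi> x) * (\<Sum>y\<in>UNIV. P x y * (g$y / sqrt (\<pi> y)))"
    by (simp add: S_def sum_distrib_left mult_ac)
  ultimately show "(\<Sum>y\<in>UNIV. P x y * (g$y / sqrt (\<pi> y))) = l * (g$x / sqrt (\<pi> x))"
    using pi_pos[of x] by (simp add: field_simps)
qed

lemma is_eig_iff: "is_eigenvalue P l \<longleftrightarrow> (\<exists>g. g \<noteq> 0 \<and> ap S g = l *\<^sub>R g)"
proof
  assume "is_eigenvalue P l"
  then obtain v where v: "v \<noteq> (\<lambda>_. 0)" "\<forall>x. (\<Sum>y\<in>UNIV. P x y * v y) = l * v x"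
    by (auto simp: is_eigenvalue_def)
  obtain x where "v x \<noteq> 0" using v(1) by auto
  hence "(\<chi> x. sqrt (\<pi> x) * v x) \<noteq> 0" using pi_pos[of x] by (auto simp: vec_eq_iff)
  thus "\<exists>g. g \<noteq> 0 \<and> ap S g = l *\<^sub>R g" using eig_to_S[OF v(2)] by blast
next
  assume "\<exists>g. g \<noteq> 0 \<and> ap S g = l *\<^sub>R g"
  then obtain g where g: "g \<noteq> 0" "ap S g = l *\<^sub>R g" by blast
  obtain x where "g$x \<noteq> 0" using g(1) by (auto simp: vec_eq_iff)
  hence "(\<lambda>y. g$y / sqrt (\<pi> y)) \<noteq> (\<lambda>_. 0)" using pi_pos[of x] by (auto dest: fun_cong[of _ _ x])
  thus "is_eigenvalue P l" using S_to_eig[OF g(2)] unfolding is_eigenvalue_def by blast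
qed

lemma harmonic_const:
  assumes h: "\<forall>x. (\<Sum>y\<in>UNIV. P x y * v y) = v x"
  shows "v x = v y"
proof -
  define M where "M = Max (range v)"
  have le: "v z \<le> M" for z unfolding M_def by simp
  obtain x0 where x0: "v x0 = M" unfolding M_def
    by (metis (mono_tags, lifting) Max_in UNIV_not_empty finite finite_imageI image_iff image_is_empty)
  have step: "v z = M" if vx: "v x = M" and Pxz: "P x z > 0" for x z
  proof -
    have "(\<Sum>z\<in>UNIV. P x z * (M - v z)) = M * (\<Sum>z\<in>UNIV. P x z) - (\<Sum>z\<in>UNIV. P x z * v z)"
      by (simp add: algebra_simps sum_subtractf sum_distrib_left)
    also have "\<dots> = 0" using h vx P_row by simp
    finally have "\<forall>z\<in>UNIV. P x z * (M - v z) = 0"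
      by (subst sum_nonneg_eq_0_iff[symmetric]) (auto intro!: mult_nonneg_nonneg P_nonneg simp: le)
    thus ?thesis using Pxz by (metis UNIV_I less_irrefl mult_eq_0_iff right_minus_eq)
  qed
  have main: "\<And>x. v x = M \<Longrightarrow> mpow P k x y > 0 \<Longrightarrow> v y = M" for k y
  proof (induction k)
    case 0 thus ?case by (auto split: if_splits)
  next
    case (Suc k)
    obtain z where z: "P x z * mpow P k z y > 0"
      using sum_pos_ex[of "\<lambda>z. P x z * mpow P k z y" UNIV] Suc.prems by auto
    have Pxz: "P x z > 0" and mk: "mpow P k z y > 0"
      using z P_nonneg[of x z] mpow_nonneg[of k z y]
      by (metis less_eq_real_def mult_nonneg_nonneg not_less mult_eq_0_iff)+
    show ?case using Suc.IH[OF step[OF Suc.prems(1) Pxz] mk] .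
  qed
  have all: "v z = M" for z
  proof -
    obtain k where "mpow P k x0 z > 0" using irr by (auto simp: irreducible_chain_def)
    thus ?thesis using main x0 by blast
  qed
  show ?thesis using all[of x] all[of y] by simp
qed

lemma eig_le1:
  assumes "is_eigenvalue P l" shows "l \<le> 1"
proof -
  obtain v where v: "v \<noteq> (\<lambda>_. 0)" "\<forall>x. (\<Sum>y\<in>UNIV. P x y * v y) = l * v x"
    using assms by (auto simp: is_eigenvalue_def)
  define m where "m = Max (range (\<lambda>x. \<bar>v x\<bar>))"
  have le: "\<bar>v z\<bar> \<le> m" for z unfolding m_def by simp
  obtain x0 where x0: "\<bar>v x0\<bar> = m" unfolding m_def
    by (metis (mono_tags, lifting) Max_in UNIV_not_empty finite finite_imageI image_iff image_is_empty)
  obtain x1 where "v x1 \<noteq> 0" using v(1) by auto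
  hence mpos: "m > 0" using le[of x1] by simp
  have "\<bar>l\<bar> * m = \<bar>\<Sum>y\<in>UNIV. P x0 y * v y\<bar>" using v(2) x0 by (simp add: abs_mult)
  also have "\<dots> \<le> (\<Sum>y\<in>UNIV. P x0 y * \<bar>v y\<bar>)"
    by (rule order_trans[OF sum_abs]) (simp add: abs_mult P_nonneg)
  also have "\<dots> \<le> (\<Sum>y\<in>UNIV. P x0 y * m)"
    by (intro sum_mono mult_left_mono le P_nonneg)
  also have "\<dots> = m" by (simp add: sum_distrib_right[symmetric] P_row)
  finally have "\<bar>l\<bar> * m \<le> 1 * m" by simp
  hence "\<bar>l\<bar> \<le> 1" using mpos by (rule mult_right_le_imp_le)
  thus ?thesis by simp
qed

lemma S_eig_perp:
  assumes e: "e \<noteq> 0" "e \<bullet> r = 0" "ap S e = \<mu> *\<^sub>R e"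
  shows "is_eigenvalue P \<mu> \<and> \<mu> \<noteq> 1"
proof
  show "is_eigenvalue P \<mu>" using is_eig_iff e by blast
  show "\<mu> \<noteq> 1"
  proof
    assume "\<mu> = 1"
    hence h: "\<forall>x. (\<Sum>y\<in>UNIV. P x y * (e$y / sqrt (\<pi> y))) = (e$x / sqrt (\<pi> x))"
      using S_to_eig[OF e(3)] by simp
    obtain x0 :: 'a where True by blast
    define c where "c = e$x0 / sqrt (\<pi> x0)"
    have ec: "e$x = c * sqrt (\<pi> x)" for x
      using harmonic_const[OF h, of x x0] unfolding c_def by (simp add: field_simps)
    have "e = c *\<^sub>R r" by (simp add: vec_eq_iff ec r_def)
    hence "c = 0" using e(2) r_norm by simp
    thus False using \<open>e = c *\<^sub>R r\<close> e(1) by simp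
  qed
qed

lemma eig_finite: "finite {l. is_eigenvalue P l}"
proof -
  define L where "L = {l. is_eigenvalue P l}"
  define g where "g l = (SOME g. g \<noteq> 0 \<and> ap S g = l *\<^sub>R g)" for l
  have g: "g l \<noteq> 0 \<and> ap S (g l) = l *\<^sub>R g l" if "l \<in> L" for l
  proof -
    have "\<exists>g. g \<noteq> 0 \<and> ap S g = l *\<^sub>R g" using that unfolding L_def is_eig_iff by simp
    from someI_ex[OF this] show ?thesis unfolding g_def .
  qed
  have orth: "g l \<bullet> g l' = 0" if "l \<in> L" "l' \<in> L" "l \<noteq> l'" for l l'
  proof -
    have "l * (g l \<bullet> g l') = ap S (g l) \<bullet> g l'" using g[OF that(1)] by simp
    also have "\<dots> = g l \<bullet> ap S (g l')" by (rule ap_sym[OF S_sym])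
    also have "\<dots> = l' * (g l \<bullet> g l')" using g[OF that(2)] by simp
    finally show ?thesis using that(3) by simp
  qed
  have inj: "inj_on g L"
  proof (rule inj_onI)
    fix l l' assume "l \<in> L" "l' \<in> L" "g l = g l'"
    hence "l *\<^sub>R g l = l' *\<^sub>R g l" using g by metis
    thus "l = l'" using g[OF \<open>l \<in> L\<close>] by simp
  qed
  have "pairwise orthogonal (g ` L)"
    unfolding pairwise_def orthogonal_def using orth by auto
  moreover have "0 \<notin> g ` L" using g by auto
  ultimately have "independent (g ` L)" by (rule pairwise_orthogonal_independent)
  hence "finite (g ` L)" by (rule finiteI_independent)
  thus ?thesis using finite_imageD[OF _ inj] L_def by blast
qed

lemma perp_decomp:
  assumes "h \<bullet> r = 0"
  shows "\<exists>E \<mu>. finite E \<and> E \<subseteq> {y. orthogonal r y} \<and> pairwise orthogonal E \<and>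
     (\<forall>e\<in>E. ap S e = \<mu> e *\<^sub>R e) \<and> h = \<Sum>E"
proof -
  have sV: "subspace {y. orthogonal r y}" by (rule subspace_orthogonal_to_vector)
  have iV: "\<forall>g\<in>{y. orthogonal r y}. ap S g \<in> {y. orthogonal r y}"
    using ap_sym[OF S_sym, of r] by (simp add: orthogonal_def ap_S_r)
  have "h \<in> {y. orthogonal r y}" using assms by (simp add: orthogonal_def inner_commute)
  from spectral_decomp[OF S_sym sV iV this] obtain E where E: "finite E" "E \<subseteq> {y. orthogonal r y}"
    "pairwise orthogonal E" "\<forall>e\<in>E. \<exists>\<mu>. ap S e = \<mu> *\<^sub>R e" "h = \<Sum>E" by blast
  from E(4) obtain \<mu> where "\<forall>e\<in>E. ap S e = \<mu> e *\<^sub>R e" by metis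
  thus ?thesis using E by blast
qed

definition Lset where "Lset = {l. is_eigenvalue P l \<and> l \<noteq> 1}"

lemma Lset_finite: "finite Lset"
  unfolding Lset_def by (rule finite_subset[OF _ eig_finite]) auto

lemma gap_bound:
  assumes "h \<bullet> r = 0"
  shows "h \<bullet> ap S h \<le> lambda2 P * (h \<bullet> h)"
proof -
  obtain E \<mu> where E: "finite E" "E \<subseteq> {y. orthogonal r y}" "pairwise orthogonal E"
     "\<forall>e\<in>E. ap S e = \<mu> e *\<^sub>R e" "h = \<Sum>E"
    using perp_decomp[OF assms] by blast
  have "h \<bullet> ap S h = (\<Sum>E) \<bullet> (\<Sum>e\<in>E. \<mu> e *\<^sub>R e)"
    using E(4,5) by (simp add: ap_sum)
  also have "\<dots> = (\<Sum>e\<in>E. \<mu> e * (e \<bullet> e))" by (rule orth_sum_inner[OF E(1,3)])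
  also have "\<dots> \<le> (\<Sum>e\<in>E. lambda2 P * (e \<bullet> e))"
  proof (rule sum_mono)
    fix e assume eE: "e \<in> E"
    show "\<mu> e * (e \<bullet> e) \<le> lambda2 P * (e \<bullet> e)"
    proof (cases "e = 0")
      case True thus ?thesis by simp
    next
      case False
      have "e \<bullet> r = 0" using E(2) eE by (auto simp: orthogonal_def inner_commute)
      hence "\<mu> e \<in> Lset" using S_eig_perp[OF False _ ] E(4) eE unfolding Lset_def by blast
      hence "\<mu> e \<le> lambda2 P" unfolding lambda2_def Lset_def[symmetric] using Lset_finite by simp
      thus ?thesis by (intro mult_right_mono) auto
    qed
  qed
  also have "\<dots> = lambda2 P * (h \<bullet> h)"
    using orth_sum_norm[OF E(1,3)] E(5) by (simp add: sum_distrib_left)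
  finally show ?thesis .
qed

lemma lambda2_lt1:
  assumes "card (UNIV :: 'a set) \<ge> 2"
  shows "lambda2 P < 1"
proof -
  obtain a b :: 'a where ab: "a \<noteq> b"
    using assms by (metis One_nat_def card_le_Suc0_iff_eq finite not_less_eq_eq numeral_2_eq_2)
  define h :: "real^'a" where "h = (\<chi> x. if x = a then r$b else if x = b then - r$a else 0)"
  have hr: "h \<bullet> r = 0"
  proof -
    have "h \<bullet> r = (\<Sum>x\<in>UNIV. (if x = a then r$b * r$a else 0) + (if x = b then - r$a * r$b else 0))"
      unfolding h_def inner_vec_def using ab by (intro sum.cong) auto
    also have "\<dots> = 0" by (simp add: sum.distrib)
    finally show ?thesis .
  qed
  have h0: "h \<noteq> 0"
  proof
    assume "h = 0" hence "h$a = 0" by simp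
    thus False using r_pos[of b] by (simp add: h_def)
  qed
  obtain E \<mu> where E: "finite E" "E \<subseteq> {y. orthogonal r y}" "pairwise orthogonal E"
     "\<forall>e\<in>E. ap S e = \<mu> e *\<^sub>R e" "h = \<Sum>E"
    using perp_decomp[OF hr] by blast
  obtain e where eE: "e \<in> E" "e \<noteq> 0"
  proof (rule ccontr)
    assume "\<not> thesis"
    hence "\<forall>e\<in>E. e = 0" using that by blast
    hence "\<Sum>E = 0" by (simp add: sum.neutral)
    thus False using h0 E(5) by simp
  qed
  have "e \<bullet> r = 0" using E(2) eE by (auto simp: orthogonal_def inner_commute)
  hence "\<mu> e \<in> Lset" using S_eig_perp[OF eE(2)] E(4) eE unfolding Lset_def by blast
  hence ne: "Lset \<noteq> {}" by blast
  have "lambda2 P \<in> Lset" unfolding lambda2_def Lset_def[symmetric] using Lset_finite ne by simp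
  thus ?thesis using eig_le1 unfolding Lset_def by force
qed

definition phi :: "'a set \<Rightarrow> real^'a" where
  "phi B = (\<chi> x. if x \<in> B then 0 else sqrt (\<pi> x))"

lemma phi_norm: "phi B \<bullet> phi B = 1 - sum \<pi> B"
proof -
  have "phi B \<bullet> phi B = (\<Sum>x\<in>UNIV. if x \<in> B then 0 else \<pi> x)"
    unfolding phi_def inner_vec_def using pi_nonneg by (intro sum.cong) auto
  also have "\<dots> = (\<Sum>x\<in>UNIV. \<pi> x) - sum \<pi> B"
  proof -
    have "(\<Sum>x\<in>UNIV. \<pi> x) = (\<Sum>x\<in>UNIV. if x \<in> B then 0 else \<pi> x) + (\<Sum>x\<in>UNIV. if x \<in> B then \<pi> x else 0)"
      by (subst sum.distrib[symmetric]) (intro sum.cong, auto)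
    moreover have "(\<Sum>x\<in>UNIV. if x \<in> B then \<pi> x else 0) = sum \<pi> B"
      by (simp add: sum.If_cases)
    ultimately show ?thesis by simp
  qed
  finally show ?thesis by (simp add: pi_sum)
qed

lemma dirichlet_bound:
  assumes l1: "lambda2 P \<le> 1" and gB: "\<forall>x\<in>B. g$x = 0"
  shows "g \<bullet> ap S g \<le> (1 - (1 - lambda2 P) * sum \<pi> B) * (g \<bullet> g)"
proof -
  define c where "c = g \<bullet> r"
  define h where "h = g - c *\<^sub>R r"
  have hr: "h \<bullet> r = 0" unfolding h_def c_def using r_norm by (simp add: inner_diff_left)
  have rSh: "r \<bullet> ap S h = 0" using ap_sym[OF S_sym, of r h] hr by (simp add: ap_S_r inner_commute)
  have g_eq: "g = h + c *\<^sub>R r" unfolding h_def by simp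
  have gSg: "g \<bullet> ap S g = h \<bullet> ap S h + c^2"
    unfolding g_eq using rSh hr r_norm
    by (simp add: ap_add ap_scale ap_S_r inner_add_left inner_add_right inner_commute power2_eq_square)
  have gg: "g \<bullet> g = h \<bullet> h + c^2"
    unfolding g_eq using hr r_norm
    by (simp add: inner_add_left inner_add_right inner_commute power2_eq_square)
  have "c = g \<bullet> phi B"
    unfolding c_def r_def phi_def inner_vec_def using gB by (intro sum.cong) auto
  hence c2: "c^2 \<le> (g \<bullet> g) * (1 - sum \<pi> B)"
    using Cauchy_Schwarz_ineq[of g "phi B"] phi_norm by simp
  have "g \<bullet> ap S g \<le> lambda2 P * (h \<bullet> h) + c^2" using gSg gap_bound[OF hr] by simp
  also have "\<dots> = lambda2 P * (g \<bullet> g) + (1 - lambda2 P) * c^2" using gg by (simp add: algebra_simps)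
  also have "\<dots> \<le> lambda2 P * (g \<bullet> g) + (1 - lambda2 P) * ((g \<bullet> g) * (1 - sum \<pi> B))"
    using c2 l1 by (intro add_left_mono mult_left_mono) auto
  also have "\<dots> = (1 - (1 - lambda2 P) * sum \<pi> B) * (g \<bullet> g)" by (simp add: algebra_simps)
  finally show ?thesis .
qed

end



lemma wsum_summable:
  fixes t :: real and b :: "nat \<Rightarrow> real"
  assumes "\<forall>k. \<bar>b k\<bar> \<le> 1"
  shows "summable (\<lambda>k. exp (- t) * \<bar>t\<bar> ^ k / fact k * b k)"
proof -
  have "summable (\<lambda>k. \<bar>t\<bar> ^ k /\<^sub>R fact k)" using exp_converges sums_summable by blast
  hence s: "summable (\<lambda>k. exp (- t) * (\<bar>t\<bar> ^ k / fact k))"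
    by (intro summable_mult) (simp add: divide_inverse_commute)
  show ?thesis
  proof (rule summable_comparison_test[OF _ s], intro exI allI impI)
    fix k :: nat
    have "norm (exp (- t) * \<bar>t\<bar> ^ k / fact k * b k) = exp (- t) * (\<bar>t\<bar> ^ k / fact k) * \<bar>b k\<bar>"
      by (simp add: abs_mult)
    also have "\<dots> \<le> exp (- t) * (\<bar>t\<bar> ^ k / fact k) * 1"
      using assms by (intro mult_left_mono) auto
    finally show "norm (exp (- t) * \<bar>t\<bar> ^ k / fact k * b k) \<le> exp (- t) * (\<bar>t\<bar> ^ k / fact k)" by simp
  qed
qed

lemma wsum_summable':
  fixes t :: real and b :: "nat \<Rightarrow> real"
  assumes "\<forall>k. \<bar>b k\<bar> \<le> 1" "t \<ge> 0"
  shows "summable (\<lambda>k. exp (- t) * t ^ k / fact k * b k)"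
  using wsum_summable[OF assms(1), of t] assms(2) by simp

lemma w_sums:
  fixes t \<mu> :: real
  shows "(\<lambda>k. exp (- t) * t ^ k / fact k * \<mu> ^ k) sums (exp (- t) * exp (t * \<mu>))"
proof -
  have "(\<lambda>k. (t * \<mu>) ^ k /\<^sub>R fact k) sums exp (t * \<mu>)" by (rule exp_converges)
  hence "(\<lambda>k. exp (- t) * ((t * \<mu>) ^ k /\<^sub>R fact k)) sums (exp (- t) * exp (t * \<mu>))"
    by (rule sums_mult)
  thus ?thesis by (simp add: power_mult_distrib divide_inverse_commute mult_ac)
qed

context chain begin

lemma avoid_B: "x \<in> B \<Longrightarrow> avoid P B k x = 0"
  by (cases k) auto

lemma avoid_bounds: "0 \<le> avoid P B k x \<and> avoid P B k x \<le> 1"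
proof (induction k arbitrary: x)
  case 0 show ?case by simp
next
  case (Suc k)
  have "(\<Sum>y\<in>UNIV. P x y * avoid P B k y) \<le> (\<Sum>y\<in>UNIV. P x y * 1)"
    using Suc P_nonneg by (intro sum_mono mult_left_mono) auto
  moreover have "0 \<le> (\<Sum>y\<in>UNIV. P x y * avoid P B k y)"
    using Suc P_nonneg by (intro sum_nonneg mult_nonneg_nonneg) auto
  ultimately show ?case by (simp add: P_row)
qed

lemma avoid_nonneg: "0 \<le> avoid P B k x" using avoid_bounds by blast
lemma avoid_le1: "avoid P B k x \<le> 1" using avoid_bounds by blast
lemma avoid_abs: "\<bar>avoid P B k x\<bar> \<le> 1" using avoid_bounds by (simp add: abs_le_iff) 

definition SK :: "'a set \<Rightarrow> 'a \<Rightarrow> 'a \<Rightarrow> real" where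
  "SK B x y = (if x \<notin> B \<and> y \<notin> B then S x y else 0)"

lemma SK_sym: "\<forall>x y. SK B x y = SK B y x"
  using S_sym by (auto simp: SK_def)

definition psi :: "'a set \<Rightarrow> nat \<Rightarrow> real^'a" where
  "psi B k = (\<chi> x. sqrt (\<pi> x) * avoid P B k x)"

lemma psi_0: "psi B 0 = phi B" by (simp add: psi_def phi_def vec_eq_iff)

lemma psi_Suc: "psi B (Suc k) = ap (SK B) (psi B k)"
proof -
  have "(\<Sum>y\<in>UNIV. SK B x y * (sqrt (\<pi> y) * avoid P B k y))
        = (if x \<in> B then 0 else sqrt (\<pi> x) * (\<Sum>y\<in>UNIV. P x y * avoid P B k y))" for x
  proof (cases "x \<in> B")
    case True thus ?thesis by (simp add: SK_def)
  next
    case False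
    have "(\<Sum>y\<in>UNIV. SK B x y * (sqrt (\<pi> y) * avoid P B k y))
        = (\<Sum>y\<in>UNIV. sqrt (\<pi> x) * (P x y * avoid P B k y))"
      using False by (intro sum.cong) (auto simp: SK_def S_def avoid_B)
    thus ?thesis using False by (simp add: sum_distrib_left)
  qed
  thus ?thesis by (simp add: psi_def ap_def vec_eq_iff)
qed

lemma psi_iter: "psi B k = (ap (SK B) ^^ k) (phi B)"
  by (induction k) (simp_all add: psi_0 psi_Suc)

lemma sum_pi_avoid: "(\<Sum>x\<in>UNIV. \<pi> x * avoid P B k x) = phi B \<bullet> psi B k"
  unfolding phi_def psi_def inner_vec_def
  using pi_nonneg by (intro sum.cong) (auto simp: avoid_B mult.assoc[symmetric])

definition VB :: "'a set \<Rightarrow> (real^'a) set" where "VB B = {g. \<forall>x\<in>B. g$x = 0}"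

lemma VB_subspace: "subspace (VB B)"
  unfolding subspace_def VB_def by simp

lemma VB_inv: "\<forall>g\<in>VB B. ap (SK B) g \<in> VB B"
  by (simp add: VB_def ap_def SK_def)

lemma phi_VB: "phi B \<in> VB B" by (simp add: VB_def phi_def)

lemma SK_S: "g \<in> VB B \<Longrightarrow> g \<bullet> ap (SK B) g = g \<bullet> ap S g"
  unfolding VB_def ap_def inner_vec_def
  by (intro sum.cong refl) (auto simp: SK_def intro!: sum.cong)

lemma survival_pi_bound:
  assumes l1: "lambda2 P \<le> 1" and s0: "s \<ge> 0"
  shows "survival P \<pi> B s \<le> (1 - sum \<pi> B) * exp (- (s * ((1 - lambda2 P) * sum \<pi> B)))"
proof -
  define lam where "lam = (1 - lambda2 P) * sum \<pi> B"
  obtain E where E: "finite E" "E \<subseteq> VB B" "pairwise orthogonal E"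
      "\<forall>e\<in>E. \<exists>\<mu>. ap (SK B) e = \<mu> *\<^sub>R e" "phi B = \<Sum>E"
    using spectral_decomp[OF SK_sym VB_subspace VB_inv phi_VB] by blast
  from E(4) obtain \<mu> where mu: "\<forall>e\<in>E. ap (SK B) e = \<mu> e *\<^sub>R e" by metis
  have mu_le: "\<mu> e \<le> 1 - lam" if "e \<in> E" "e \<noteq> 0" for e
  proof -
    have eV: "e \<in> VB B" using E(2) that by blast
    have "\<mu> e * (e \<bullet> e) = e \<bullet> ap (SK B) e" using mu that by simp
    also have "\<dots> = e \<bullet> ap S e" using SK_S[OF eV] .
    also have "\<dots> \<le> (1 - lam) * (e \<bullet> e)" unfolding lam_def
      using dirichlet_bound[OF l1] eV by (simp add: VB_def)
    finally show ?thesis using that(2) by (simp add: mult_le_cancel_right)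
  qed
  define w where "w k = exp (- s) * s ^ k / fact k" for k
  have spa: "(\<Sum>x\<in>UNIV. \<pi> x * avoid P B k x) = (\<Sum>e\<in>E. \<mu> e ^ k * (e \<bullet> e))" for k
  proof -
    have "(\<Sum>x\<in>UNIV. \<pi> x * avoid P B k x) = phi B \<bullet> psi B k" by (rule sum_pi_avoid)
    also have "\<dots> = (\<Sum>E) \<bullet> (ap (SK B) ^^ k) (\<Sum>E)" by (simp only: psi_iter E(5))
    also have "\<dots> = (\<Sum>E) \<bullet> (\<Sum>e\<in>E. (\<mu> e ^ k) *\<^sub>R e)" by (simp only: ap_iter_eigen[OF mu])
    also have "\<dots> = (\<Sum>e\<in>E. \<mu> e ^ k * (e \<bullet> e))" by (rule orth_sum_inner[OF E(1,3)])
    finally show ?thesis .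
  qed
  have s1: "(\<lambda>k. \<Sum>x\<in>UNIV. \<pi> x * (w k * avoid P B k x)) sums survival P \<pi> B s"
    unfolding survival_def w_def
  proof (rule sums_sum)
    fix x :: 'a
    have "summable (\<lambda>k. exp (- s) * s ^ k / fact k * avoid P B k x)"
    proof -
      have "\<forall>k. \<bar>avoid P B k x\<bar> \<le> 1" using avoid_abs by simp
      thus ?thesis using wsum_summable'[OF _ s0] by simp
    qed
    hence "(\<lambda>k. exp (- s) * s ^ k / fact k * avoid P B k x) sums (\<Sum>k. exp (- s) * s ^ k / fact k * avoid P B k x)"
      by (rule summable_sums)
    thus "(\<lambda>k. \<pi> x * (exp (- s) * s ^ k / fact k * avoid P B k x)) sums
          (\<pi> x * (\<Sum>k. exp (- s) * s ^ k / fact k * avoid P B k x))"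
      by (rule sums_mult)
  qed
  have s2: "(\<lambda>k. \<Sum>e\<in>E. (e \<bullet> e) * (w k * \<mu> e ^ k)) sums (\<Sum>e\<in>E. (e \<bullet> e) * (exp (- s) * exp (s * \<mu> e)))"
    unfolding w_def by (intro sums_sum sums_mult w_sums)
  have eq: "(\<Sum>x\<in>UNIV. \<pi> x * (w k * avoid P B k x)) = (\<Sum>e\<in>E. (e \<bullet> e) * (w k * \<mu> e ^ k))" for k
  proof -
    have "(\<Sum>x\<in>UNIV. \<pi> x * (w k * avoid P B k x)) = w k * (\<Sum>x\<in>UNIV. \<pi> x * avoid P B k x)"
      by (simp add: sum_distrib_left mult_ac)
    also have "\<dots> = (\<Sum>e\<in>E. (e \<bullet> e) * (w k * \<mu> e ^ k))" by (simp add: spa sum_distrib_left mult_ac)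
    finally show ?thesis .
  qed
  have "survival P \<pi> B s = (\<Sum>e\<in>E. (e \<bullet> e) * (exp (- s) * exp (s * \<mu> e)))"
  proof -
    have "(\<lambda>k. \<Sum>x\<in>UNIV. \<pi> x * (w k * avoid P B k x)) = (\<lambda>k. \<Sum>e\<in>E. (e \<bullet> e) * (w k * \<mu> e ^ k))"
      using eq by (rule ext)
    with s1 have "(\<lambda>k. \<Sum>e\<in>E. (e \<bullet> e) * (w k * \<mu> e ^ k)) sums survival P \<pi> B s" by simp
    from sums_unique2[OF this s2] show ?thesis .
  qed
  also have "\<dots> \<le> (\<Sum>e\<in>E. (e \<bullet> e) * exp (- (s * lam)))"
  proof (rule sum_mono)
    fix e assume eE: "e \<in> E"
    show "(e \<bullet> e) * (exp (- s) * exp (s * \<mu> e)) \<le> (e \<bullet> e) * exp (- (s * lam))"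
    proof (cases "e = 0")
      case True thus ?thesis by simp
    next
      case False
      have "s * \<mu> e \<le> s * (1 - lam)" using mu_le[OF eE False] s0 by (rule mult_left_mono)
      hence "exp (- s) * exp (s * \<mu> e) \<le> exp (- (s * lam))"
        by (simp add: exp_add[symmetric] algebra_simps)
      thus ?thesis by (intro mult_left_mono) auto
    qed
  qed
  also have "\<dots> = (phi B \<bullet> phi B) * exp (- (s * lam))"
    using orth_sum_norm[OF E(1,3)] E(5) by (simp add: sum_distrib_right)
  finally show ?thesis by (simp add: phi_norm lam_def)
qed

end



definition wt :: "real \<Rightarrow> nat \<Rightarrow> real" where "wt t k = exp (- t) * t ^ k / fact k"

lemma wt_nonneg: "t \<ge> 0 \<Longrightarrow> 0 \<le> wt t k" by (simp add: wt_def)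

lemma wt_sums1: "(\<lambda>k. wt t k) sums 1"
  using w_sums[of t 1] by (simp add: wt_def exp_minus field_simps)

lemma wt_partial_le1: "t \<ge> 0 \<Longrightarrow> sum (wt t) {..<N} \<le> 1"
  using sum_le_suminf[OF sums_summable[OF wt_sums1], of "{..<N}"] sums_unique[OF wt_sums1] wt_nonneg
  by auto

lemma wt_binom: "wt (t + s) n = (\<Sum>i\<le>n. wt t i * wt s (n - i))"
proof -
  have "wt (t + s) n = exp (- t) * exp (- s) * ((t + s) ^ n / fact n)"
    by (simp add: wt_def exp_add[symmetric])
  also have "(t + s) ^ n / fact n = (\<Sum>i\<le>n. t ^ i / fact i * (s ^ (n - i) / fact (n - i)))"
  proof -
    have "(t + s) ^ n / fact n = (\<Sum>i\<le>n. of_nat (n choose i) * t ^ i * s ^ (n - i) / fact n)"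
      by (simp add: binomial_ring sum_divide_distrib)
    also have "\<dots> = (\<Sum>i\<le>n. t ^ i / fact i * (s ^ (n - i) / fact (n - i)))"
    proof (rule sum.cong[OF refl])
      fix i assume "i \<in> {..n}" hence i: "i \<le> n" by simp
      show "of_nat (n choose i) * t ^ i * s ^ (n - i) / fact n = t ^ i / fact i * (s ^ (n - i) / fact (n - i))"
        using binomial_fact[OF i, where 'a=real] by (simp add: field_simps)
    qed
    finally show ?thesis .
  qed
  finally show ?thesis by (simp add: wt_def sum_distrib_left mult_ac)
qed

context chain begin

definition Fv :: "'a set \<Rightarrow> real \<Rightarrow> 'a \<Rightarrow> real" where
  "Fv A t x = (\<Sum>k. wt t k * avoid P A k x)"

lemma survival_Fv: "survival P \<mu> A t = (\<Sum>x\<in>UNIV. \<mu> x * Fv A t x)"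
  by (simp add: survival_def Fv_def wt_def)

lemma Fv_summable: "t \<ge> 0 \<Longrightarrow> summable (\<lambda>k. wt t k * avoid P A k x)"
proof -
  assume t: "t \<ge> 0"
  have "\<forall>k. \<bar>avoid P A k x\<bar> \<le> 1" using avoid_abs by simp
  thus ?thesis using wsum_summable'[OF _ t] by (simp add: wt_def)
qed

lemma Fv_nonneg: "t \<ge> 0 \<Longrightarrow> 0 \<le> Fv A t x"
  unfolding Fv_def by (intro suminf_nonneg Fv_summable) (auto intro!: mult_nonneg_nonneg wt_nonneg avoid_nonneg)

lemma Fv_partial: "t \<ge> 0 \<Longrightarrow> (\<Sum>k<N. wt t k * avoid P A k x) \<le> Fv A t x"
  unfolding Fv_def
  by (rule sum_le_suminf[OF Fv_summable]) (auto intro!: mult_nonneg_nonneg wt_nonneg avoid_nonneg)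

lemma avoid_Suc_le: "avoid P B (Suc k) x \<le> avoid P B k x"
proof (induction k arbitrary: x)
  case 0
  have "(\<Sum>y\<in>UNIV. P x y * avoid P B 0 y) \<le> (\<Sum>y\<in>UNIV. P x y * 1)"
    using avoid_le1 P_nonneg by (intro sum_mono mult_left_mono) auto
  thus ?case by (simp add: P_row)
next
  case (Suc k)
  show ?case
    using Suc P_nonneg by (auto intro!: sum_mono mult_left_mono)
qed

lemma avoid_mono: "avoid P B (k + m) x \<le> avoid P B k x"
proof (induction m)
  case 0 show ?case by simp
next
  case (Suc m) thus ?case using avoid_Suc_le[of B "k + m" x] by simp
qed

lemma strong_markov:
  "\<exists>q. (\<forall>x y. 0 \<le> q x y) \<and> (\<forall>x. (\<Sum>y\<in>A. q x y) \<le> 1) \<and>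
       (\<forall>x j. avoid P B (i + j) x \<le> avoid P A i x + (\<Sum>y\<in>A. q x y * avoid P B j y))"
proof (induction i)
  case 0
  define q where "q x y = (if x \<in> A \<and> y = x then 1 else 0::real)" for x y
  have sq: "(\<Sum>y\<in>A. q x y * f y) = (if x \<in> A then f x else 0)" for x and f :: "'a \<Rightarrow> real"
    unfolding q_def by (simp add: if_distrib if_distribR sum.delta cong: if_cong)
  show ?case
  proof (intro exI[of _ q] conjI allI)
    fix x y show "0 \<le> q x y" by (simp add: q_def)
  next
    fix x show "(\<Sum>y\<in>A. q x y) \<le> 1" using sq[of x "\<lambda>_. 1"] by simp
  next
    fix x j show "avoid P B (0 + j) x \<le> avoid P A 0 x + (\<Sum>y\<in>A. q x y * avoid P B j y)"
      using sq[of x "avoid P B j"] avoid_le1[of B j x] by simp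
  qed
next
  case (Suc i)
  then obtain q where q: "\<forall>x y. 0 \<le> q x y" "\<forall>x. (\<Sum>y\<in>A. q x y) \<le> 1"
    "\<forall>x j. avoid P B (i + j) x \<le> avoid P A i x + (\<Sum>y\<in>A. q x y * avoid P B j y)" by blast
  define q' where "q' x y = (if x \<in> A then (if y = x then 1 else 0) else (\<Sum>z\<in>UNIV. P x z * q z y))" for x y
  have sq: "(\<Sum>y\<in>A. q' x y * f y) = (if x \<in> A then f x else (\<Sum>z\<in>UNIV. P x z * (\<Sum>y\<in>A. q z y * f y)))"
    for x and f :: "'a \<Rightarrow> real"
  proof (cases "x \<in> A")
    case True thus ?thesis unfolding q'_def by (simp add: if_distrib if_distribR sum.delta cong: if_cong)
  next
    case False
    have "(\<Sum>y\<in>A. q' x y * f y) = (\<Sum>y\<in>A. \<Sum>z\<in>UNIV. P x z * q z y * f y)"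
      using False unfolding q'_def by (simp add: sum_distrib_right)
    also have "\<dots> = (\<Sum>z\<in>UNIV. P x z * (\<Sum>y\<in>A. q z y * f y))"
      by (subst sum.swap) (simp add: sum_distrib_left mult_ac)
    finally show ?thesis using False by simp
  qed
  show ?case
  proof (intro exI[of _ q'] conjI allI)
    fix x y show "0 \<le> q' x y" using q(1) P_nonneg by (auto simp: q'_def intro!: sum_nonneg)
  next
    fix x
    show "(\<Sum>y\<in>A. q' x y) \<le> 1"
    proof (cases "x \<in> A")
      case True thus ?thesis using sq[of x "\<lambda>_. 1"] by simp
    next
      case False
      have "(\<Sum>z\<in>UNIV. P x z * (\<Sum>y\<in>A. q z y * 1)) \<le> (\<Sum>z\<in>UNIV. P x z * 1)"
        using q(2) P_nonneg by (intro sum_mono mult_left_mono) auto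
      thus ?thesis using sq[of x "\<lambda>_. 1"] False by (simp add: P_row)
    qed
  next
    fix x j
    have nn: "0 \<le> (\<Sum>y\<in>A. q' x y * avoid P B j y)"
      using q(1) P_nonneg avoid_nonneg by (auto simp: q'_def intro!: sum_nonneg mult_nonneg_nonneg)
    show "avoid P B (Suc i + j) x \<le> avoid P A (Suc i) x + (\<Sum>y\<in>A. q' x y * avoid P B j y)"
    proof (cases "x \<in> A")
      case True
      have "avoid P B (j + Suc i) x \<le> avoid P B j x" by (rule avoid_mono)
      thus ?thesis using True sq[of x "avoid P B j"] by (simp add: add.commute)
    next
      case xA: False
      show ?thesis
      proof (cases "x \<in> B")
        case True thus ?thesis using nn avoid_nonneg[of A "Suc i" x] by simp
      next
        case xB: False
        have "avoid P B (Suc i + j) x = (\<Sum>z\<in>UNIV. P x z * avoid P B (i + j) z)" using xB by simp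
        also have "\<dots> \<le> (\<Sum>z\<in>UNIV. P x z * (avoid P A i z + (\<Sum>y\<in>A. q z y * avoid P B j y)))"
          using q(3) P_nonneg by (intro sum_mono mult_left_mono) auto
        also have "\<dots> = avoid P A (Suc i) x + (\<Sum>y\<in>A. q' x y * avoid P B j y)"
          using xA sq[of x "avoid P B j"] by (simp add: algebra_simps sum.distrib)
        finally show ?thesis .
      qed
    qed
  qed
qed

lemma combine:
  assumes t: "t \<ge> 0" and s: "s \<ge> 0" and FA: "\<forall>y\<in>A. Fv B s y \<le> \<epsilon>" and e: "\<epsilon> \<ge> 0"
  shows "Fv B (t + s) x \<le> Fv A t x + \<epsilon>"
proof -
  have "\<forall>i. \<exists>q. (\<forall>x y. 0 \<le> q x y) \<and> (\<forall>x. (\<Sum>y\<in>A. q x y) \<le> 1) \<and>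
       (\<forall>x j. avoid P B (i + j) x \<le> avoid P A i x + (\<Sum>y\<in>A. q x y * avoid P B j y))"
    using strong_markov by blast
  from choice[OF this] obtain Q where Q: "\<And>i. (\<forall>x y. 0 \<le> Q i x y) \<and> (\<forall>x. (\<Sum>y\<in>A. Q i x y) \<le> 1) \<and>
       (\<forall>x j. avoid P B (i + j) x \<le> avoid P A i x + (\<Sum>y\<in>A. Q i x y * avoid P B j y))" by blast
  define T where "T i j = wt t i * avoid P A i x * wt s j + (\<Sum>y\<in>A. wt t i * Q i x y * (wt s j * avoid P B j y))" for i j
  have Tnn: "0 \<le> T i j" for i j
    unfolding T_def using Q t s
    by (auto intro!: add_nonneg_nonneg mult_nonneg_nonneg sum_nonneg wt_nonneg avoid_nonneg)
  have Trow: "(\<Sum>j<N. T i j) \<le> wt t i * avoid P A i x + \<epsilon> * wt t i" for i N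
  proof -
    have "(\<Sum>j<N. T i j) = wt t i * avoid P A i x * (\<Sum>j<N. wt s j)
          + (\<Sum>y\<in>A. wt t i * Q i x y * (\<Sum>j<N. wt s j * avoid P B j y))"
      unfolding T_def by (simp add: sum.distrib sum_distrib_left) (rule sum.swap)
    also have "\<dots> \<le> wt t i * avoid P A i x * 1 + (\<Sum>y\<in>A. wt t i * Q i x y * \<epsilon>)"
    proof (intro add_mono sum_mono mult_left_mono)
      show "sum (wt s) {..<N} \<le> 1" using wt_partial_le1[OF s] .
      show "0 \<le> wt t i * avoid P A i x" using t by (intro mult_nonneg_nonneg wt_nonneg avoid_nonneg)
      fix y assume y: "y \<in> A"
      show "(\<Sum>j<N. wt s j * avoid P B j y) \<le> \<epsilon>"
        using Fv_partial[OF s, where N=N and A=B and x=y] FA y by fastforce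
      show "0 \<le> wt t i * Q i x y" using Q t by (intro mult_nonneg_nonneg wt_nonneg) auto
    qed
    also have "(\<Sum>y\<in>A. wt t i * Q i x y * \<epsilon>) = wt t i * \<epsilon> * (\<Sum>y\<in>A. Q i x y)"
      by (simp add: sum_distrib_left sum_distrib_right mult_ac)
    also have "\<dots> \<le> wt t i * \<epsilon> * 1"
      using Q t e by (intro mult_left_mono mult_nonneg_nonneg wt_nonneg) auto
    finally show ?thesis by (simp add: mult_ac)
  qed
  have partial: "(\<Sum>n<N. wt (t + s) n * avoid P B n x) \<le> Fv A t x + \<epsilon>" for N
  proof -
    define g where "g i j = wt t i * wt s j * avoid P B (i + j) x" for i j
    have "(\<Sum>n<N. wt (t + s) n * avoid P B n x) = (\<Sum>n<N. \<Sum>i\<le>n. g i (n - i))"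
      unfolding g_def wt_binom by (intro sum.cong refl) (simp add: sum_distrib_right)
    also have "\<dots> = (\<Sum>(i, j)\<in>{(i, j). i + j < N}. g i j)" by (rule sum.triangle_reindex[symmetric])
    also have "\<dots> \<le> (\<Sum>(i, j)\<in>{(i, j). i + j < N}. T i j)"
    proof (rule sum_mono, clarify)
      fix i j
      have "g i j \<le> wt t i * wt s j * (avoid P A i x + (\<Sum>y\<in>A. Q i x y * avoid P B j y))"
        unfolding g_def using Q t s by (intro mult_left_mono mult_nonneg_nonneg wt_nonneg) auto
      also have "\<dots> = T i j" unfolding T_def by (simp add: algebra_simps sum_distrib_left)
      finally show "g i j \<le> T i j" .
    qed
    also have "\<dots> \<le> (\<Sum>(i, j)\<in>{..<N} \<times> {..<N}. T i j)"
      by (rule sum_mono2) (auto simp: Tnn)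
    also have "\<dots> = (\<Sum>i<N. \<Sum>j<N. T i j)" by (rule sum.cartesian_product[symmetric])
    also have "\<dots> \<le> (\<Sum>i<N. wt t i * avoid P A i x + \<epsilon> * wt t i)" by (intro sum_mono Trow)
    also have "\<dots> = (\<Sum>i<N. wt t i * avoid P A i x) + \<epsilon> * (\<Sum>i<N. wt t i)"
      by (simp add: sum.distrib sum_distrib_left)
    also have "\<dots> \<le> Fv A t x + \<epsilon> * 1"
      using Fv_partial[OF t] wt_partial_le1[OF t] e by (intro add_mono mult_left_mono) auto
    finally show ?thesis by simp
  qed
  have "t + s \<ge> 0" using t s by simp
  show ?thesis unfolding Fv_def[of B] by (rule suminf_le_const[OF Fv_summable[OF \<open>t + s \<ge> 0\<close>] partial])
qed

lemma sum_pi_le1: "sum \<pi> B \<le> 1"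
  using sum_mono2[of UNIV B \<pi>] pi_nonneg pi_sum by auto

lemma sum_pi_nonneg: "0 \<le> sum \<pi> B"
  using pi_nonneg by (simp add: sum_nonneg)

lemma Fv_le_surv: "t \<ge> 0 \<Longrightarrow> \<pi> x * Fv B t x \<le> survival P \<pi> B t"
  unfolding survival_Fv
  by (rule member_le_sum) (auto intro!: mult_nonneg_nonneg pi_nonneg Fv_nonneg)

lemma surv_pi_decay:
  assumes c2: "card (UNIV :: 'a set) \<ge> 2" and t: "t \<ge> 0" and g: "sum \<pi> B \<ge> g0" "g0 \<ge> 0"
  shows "survival P \<pi> B t \<le> (1 - sum \<pi> B) * exp (- (t * ((1 - lambda2 P) * g0)))"
proof -
  have l1: "lambda2 P < 1" using lambda2_lt1[OF c2] .
  have "survival P \<pi> B t \<le> (1 - sum \<pi> B) * exp (- (t * ((1 - lambda2 P) * sum \<pi> B)))"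
    using survival_pi_bound[OF _ t] l1 by simp
  also have "\<dots> \<le> (1 - sum \<pi> B) * exp (- (t * ((1 - lambda2 P) * g0)))"
    using sum_pi_le1[of B] l1 t g by (intro mult_left_mono) (auto intro!: mult_left_mono)
  finally show ?thesis .
qed

lemma exists_time:
  assumes c2: "card (UNIV :: 'a set) \<ge> 2" and mu: "prob_dist \<mu>" and g0: "g0 > 0" and q: "q > 0"
  shows "\<exists>t\<ge>0. \<forall>B. sum \<pi> B \<ge> g0 \<longrightarrow> survival P \<mu> B t \<le> q"
proof -
  define a where "a = (1 - lambda2 P) * g0"
  have a: "a > 0" unfolding a_def using lambda2_lt1[OF c2] g0 by simp
  define C where "C = (\<Sum>x\<in>UNIV. \<mu> x / \<pi> x)"
  have C: "C \<ge> 0" unfolding C_def using mu pi_nonneg by (auto simp: prob_dist_def intro!: sum_nonneg divide_nonneg_nonneg)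
  define t where "t = max 0 (ln ((C + 1) / q)) / a"
  have t0: "t \<ge> 0" unfolding t_def using a by simp
  have ta: "t * a \<ge> ln ((C + 1) / q)" unfolding t_def using a by simp
  have "exp (- (t * a)) \<le> exp (- ln ((C + 1) / q))" using ta by simp
  also have "\<dots> = q / (C + 1)" using C q by (simp add: exp_minus)
  finally have E: "exp (- (t * a)) \<le> q / (C + 1)" .
  have "C * exp (- (t * a)) \<le> q"
  proof -
    have "C * exp (- (t * a)) \<le> C * (q / (C + 1))" using E C by (rule mult_left_mono)
    also have "\<dots> \<le> q" using C q by (simp add: field_simps)
    finally show ?thesis .
  qed
  moreover have "survival P \<mu> B t \<le> C * exp (- (t * a))" if B: "sum \<pi> B \<ge> g0" for B
  proof -
    have "Fv B t x \<le> exp (- (t * a)) / \<pi> x" for x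
    proof -
      have "\<pi> x * Fv B t x \<le> (1 - sum \<pi> B) * exp (- (t * a))"
        using Fv_le_surv[OF t0, of x B] surv_pi_decay[OF c2 t0 B] g0 unfolding a_def by simp
      also have "\<dots> \<le> 1 * exp (- (t * a))" using sum_pi_nonneg[of B] by (intro mult_right_mono) auto
      finally show ?thesis using pi_pos[of x] by (simp add: field_simps)
    qed
    hence "survival P \<mu> B t \<le> (\<Sum>x\<in>UNIV. \<mu> x * (exp (- (t * a)) / \<pi> x))"
      unfolding survival_Fv using mu by (intro sum_mono mult_left_mono) (auto simp: prob_dist_def)
    also have "\<dots> = C * exp (- (t * a))" unfolding C_def by (simp add: sum_distrib_right)
    finally show ?thesis .
  qed
  ultimately show ?thesis using t0 by (meson order_trans)
qed

end



theorem corollary4p3: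
  fixes P :: "'a::finite \<Rightarrow> 'a \<Rightarrow> real" and \<pi> \<mu> :: "'a \<Rightarrow> real"
    and \<epsilon> \<delta> \<beta> \<gamma> :: real
  assumes "card (UNIV :: 'a set) \<ge> 2"
    and "stochastic P" and "irreducible_chain P"
    and "prob_dist \<pi>" and "reversible_wrt P \<pi>"
    and "prob_dist \<mu>"
    and "0 < \<epsilon>" and "\<epsilon> < \<delta>" and "\<delta> < 1"
    and "0 < \<beta>" and "\<beta> \<le> \<gamma>" and "\<gamma> < 1"
  shows "hit P \<pi> \<gamma> \<mu> \<delta> \<le> hit P \<pi> \<beta> \<mu> \<delta>
       \<and> hit P \<pi> \<beta> \<mu> \<delta> \<le> hit P \<pi> \<gamma> \<mu> (\<delta> - \<epsilon>)
            + (1 / \<beta>) * t_rel P * ln ((1 - \<beta>) / ((1 - \<gamma>) * \<epsilon>))"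
proof -
  note c2 = assms(1) and mu = assms(6)
  interpret chain P \<pi> using assms(2-5) by unfold_locales
  define H where "H g q = {t. 0 \<le> t \<and> (\<forall>B. sum \<pi> B \<ge> g \<longrightarrow> survival P \<mu> B t \<le> q)}" for g q
  have hitH: "hit P \<pi> g \<mu> q = Inf (H g q)" for g q by (simp add: hit_def H_def)
  have bdd: "bdd_below (H g q)" for g q unfolding H_def by (rule bdd_belowI[of _ 0]) auto
  have neH: "H g q \<noteq> {}" if "g > 0" "q > 0" for g q
    using exists_time[OF c2 mu that] unfolding H_def by blast
  have part1: "hit P \<pi> \<gamma> \<mu> \<delta> \<le> hit P \<pi> \<beta> \<mu> \<delta>"
    unfolding hitH
  proof (rule cInf_superset_mono[OF neH bdd])
    show "0 < \<beta>" "0 < \<delta>" using assms by auto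
    show "H \<beta> \<delta> \<subseteq> H \<gamma> \<delta>" unfolding H_def using assms(11) by auto
  qed
  define gap where "gap = 1 - lambda2 P"
  have gap: "gap > 0" unfolding gap_def using lambda2_lt1[OF c2] by simp
  define R where "R = (1 - \<beta>) / ((1 - \<gamma>) * \<epsilon>)"
  have R: "R > 0" unfolding R_def using assms by simp
  have R1: "R \<ge> 1"
  proof -
    have "(1 - \<gamma>) * \<epsilon> \<le> 1 - \<beta>" using assms
      by (smt (verit) mult_left_le mult_nonneg_nonneg)
    thus ?thesis unfolding R_def using assms by (simp add: field_simps)
  qed
  define s where "s = (1 / \<beta>) * t_rel P * ln R"
  have s0: "s \<ge> 0" unfolding s_def t_rel_def gap_def[symmetric] using gap assms R1 by simp
  have sgb: "s * (gap * \<beta>) = ln R"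
    unfolding s_def t_rel_def gap_def[symmetric] using gap assms by (simp add: field_simps)
  have key: "t + s \<in> H \<beta> \<delta>" if tH: "t \<in> H \<gamma> (\<delta> - \<epsilon>)" for t
  proof -
    have t0: "t \<ge> 0" using tH H_def by simp
    have "survival P \<mu> B (t + s) \<le> \<delta>" if B: "sum \<pi> B \<ge> \<beta>" for B
    proof -
      define A where "A = {x. Fv B s x \<le> \<epsilon>}"
      have "sum \<pi> (- A) * \<epsilon> \<le> survival P \<pi> B s"
      proof -
        have "sum \<pi> (- A) * \<epsilon> = (\<Sum>x\<in>- A. \<pi> x * \<epsilon>)" by (simp add: sum_distrib_right)
        also have "\<dots> \<le> (\<Sum>x\<in>- A. \<pi> x * Fv B s x)"
          using pi_nonneg unfolding A_def by (intro sum_mono mult_left_mono) auto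
        also have "\<dots> \<le> (\<Sum>x\<in>UNIV. \<pi> x * Fv B s x)"
          using pi_nonneg Fv_nonneg[OF s0] by (intro sum_mono2) (auto intro!: mult_nonneg_nonneg)
        finally show ?thesis unfolding survival_Fv .
      qed
      also have "\<dots> \<le> (1 - sum \<pi> B) * exp (- (s * (gap * \<beta>)))"
        using surv_pi_decay[OF c2 s0 B] assms unfolding gap_def by simp
      also have "\<dots> \<le> (1 - \<beta>) * exp (- (s * (gap * \<beta>)))"
        using B by (intro mult_right_mono) auto
      also have "\<dots> = (1 - \<gamma>) * \<epsilon>"
        unfolding sgb using R assms by (simp add: exp_minus R_def field_simps)
      finally have "sum \<pi> (- A) \<le> 1 - \<gamma>" using assms by simp
      moreover have "sum \<pi> A + sum \<pi> (- A) = 1"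
        using sum.union_disjoint[of A "- A" \<pi>] pi_sum by (simp add: Un_commute)
      ultimately have "sum \<pi> A \<ge> \<gamma>" by simp
      hence SA: "survival P \<mu> A t \<le> \<delta> - \<epsilon>" using tH H_def by simp
      have "survival P \<mu> B (t + s) \<le> (\<Sum>x\<in>UNIV. \<mu> x * (Fv A t x + \<epsilon>))"
        unfolding survival_Fv using mu
        by (intro sum_mono mult_left_mono combine[OF t0 s0]) (auto simp: A_def prob_dist_def assms(7) less_imp_le)
      also have "\<dots> = survival P \<mu> A t + \<epsilon>"
        using mu by (simp add: survival_Fv algebra_simps sum.distrib sum_distrib_right[symmetric]
            sum_distrib_left[symmetric] prob_dist_def)
      finally show ?thesis using SA by simp
    qed
    thus ?thesis unfolding H_def using t0 s0 by simp
  qed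
  have "Inf (H \<beta> \<delta>) - s \<le> Inf (H \<gamma> (\<delta> - \<epsilon>))"
  proof (rule cInf_greatest)
    show "H \<gamma> (\<delta> - \<epsilon>) \<noteq> {}" using neH assms by simp
    fix t assume "t \<in> H \<gamma> (\<delta> - \<epsilon>)"
    hence "Inf (H \<beta> \<delta>) \<le> t + s" using key cInf_lower[OF _ bdd] by blast
    thus "Inf (H \<beta> \<delta>) - s \<le> t" by simp
  qed
  hence part2: "hit P \<pi> \<beta> \<mu> \<delta> \<le> hit P \<pi> \<gamma> \<mu> (\<delta> - \<epsilon>) + s" unfolding hitH by simp
  show ?thesis using part1 part2 unfolding s_def R_def by simp
qed


end
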